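(* Let $\langle S,L,\tau,\ell\rangle$ be a labelled Markov chain. For all $s,t\in S$, the function $\delta_{\_}(s,t):(S\to\mathcal{D}(S))\to[0,1]$ is lower semi-continuous at $\tau$: for every sequence $(\tau_n)_n$ of transition functions converging to $\tau$, $\liminf_n\delta_{\tau_n}(s,t)\ge\delta_\tau(s,t)$.
   Context: A labelled Markov chain is a tuple $\langle S,L,\tau,\ell\rangle$ with $S$ a finite set of states, $L$ a finite set of labels, $\tau:S\to\mathcal{D}(S)$ a transition function ($\mathcal{D}(X)$ = probability distributions on $X$) and $\ell:S\to L$ a labelling. For $\mu,\nu\in\mathcal{D}(X)$, $\Omega(\mu,\nu)$ is the set of couplings: distributions $\omega$ on $X\times X$ with first marginal $\mu$ and second marginal $\nu$. Transition functions are equipped with the metric $d_F(\sigma,\tau)=\max_{s,x\in S}|\sigma(s)(x)-\tau(s)(x)|$. For any transition function $\sigma$, the bisimilarity distance $\delta_\sigma:S\times S\to[0,1]$ is the least fixed point of $\Delta_\sigma$, where $\Delta_\sigma(d)(s,t)=1$ if $\ell(s)\ne\ell(t)$ and $\Delta_\sigma(d)(s,t)=\inf_{\omega\in\Omega(\sigma(s),\sigma(t))}\sum_{u,v}\omega(u,v)d(u,v)$ otherwise. *)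

theory Defs
  imports "HOL-Probability.Probability_Mass_Function" "HOL-Library.Liminf_Limsup"
begin

definition couplings :: "'a pmf \<Rightarrow> 'a pmf \<Rightarrow> ('a \<times> 'a) pmf set" where
  "couplings \<mu> \<nu> = {\<omega>. map_pmf fst \<omega> = \<mu> \<and> map_pmf snd \<omega> = \<nu>}"

definition Delta :: "('a::finite \<Rightarrow> 'l) \<Rightarrow> ('a \<Rightarrow> 'a pmf) \<Rightarrow> ('a \<Rightarrow> 'a \<Rightarrow> real) \<Rightarrow> 'a \<Rightarrow> 'a \<Rightarrow> real" where
  "Delta lab \<sigma> d s t =
     (if lab s \<noteq> lab t then 1
      else Inf {(\<Sum>p\<in>UNIV. pmf \<omega> p * d (fst p) (snd p)) | \<omega>. \<omega> \<in> couplings (\<sigma> s) (\<sigma> t)})"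

text \<open>The bisimilarity distance: the least fixed point of \<open>Delta lab \<sigma>\<close> on the complete
  lattice of functions \<open>S \<times> S \<rightarrow> [0,1]\<close>, written (as in \<open>lfp_def\<close>) as the pointwise
  infimum of all pre-fixed points.\<close>
definition bisim_dist :: "('a::finite \<Rightarrow> 'l) \<Rightarrow> ('a \<Rightarrow> 'a pmf) \<Rightarrow> 'a \<Rightarrow> 'a \<Rightarrow> real" where
  "bisim_dist lab \<sigma> s t =
     Inf {d s t | d. (\<forall>u v. 0 \<le> d u v \<and> d u v \<le> 1) \<and> (\<forall>u v. Delta lab \<sigma> d u v \<le> d u v)}"

definition dF :: "('a::finite \<Rightarrow> 'a pmf) \<Rightarrow> ('a \<Rightarrow> 'a pmf) \<Rightarrow> real" where
  "dF \<sigma> \<tau> = Max {\<bar>pmf (\<sigma> s) x - pmf (\<tau> s) x\<bar> | s x. True}"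

end

theory Submission imports Defs begin

lemma sum_UNIV_pair:
  fixes f :: "'a::finite \<times> 'b::finite \<Rightarrow> real"
  shows "(\<Sum>p\<in>UNIV. f p) = (\<Sum>x\<in>UNIV. \<Sum>y\<in>UNIV. f (x,y))"
  by (subst sum.cartesian_product) (simp add: UNIV_Times_UNIV[symmetric] del: UNIV_Times_UNIV)

lemma marg1:
  fixes \<omega> :: "('a::finite \<times> 'b::finite) pmf"
  shows "(\<Sum>y\<in>UNIV. pmf \<omega> (x,y)) = pmf (map_pmf fst \<omega>) x"
proof -
  have "pmf (map_pmf fst \<omega>) x = measure \<omega> (fst -` {x})" by (rule pmf_map)
  also have "\<dots> = sum (pmf \<omega>) (fst -` {x})" by (simp add: measure_measure_pmf_finite)
  also have "fst -` {x} = Pair x ` UNIV" by auto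
  also have "sum (pmf \<omega>) (Pair x ` UNIV) = (\<Sum>y\<in>UNIV. pmf \<omega> (x,y))"
    by (subst sum.reindex) (auto simp: inj_on_def)
  finally show ?thesis by simp
qed

lemma marg2:
  fixes \<omega> :: "('a::finite \<times> 'b::finite) pmf"
  shows "(\<Sum>x\<in>UNIV. pmf \<omega> (x,y)) = pmf (map_pmf snd \<omega>) y"
proof -
  have "pmf (map_pmf snd \<omega>) y = measure \<omega> (snd -` {y})" by (rule pmf_map)
  also have "\<dots> = sum (pmf \<omega>) (snd -` {y})" by (simp add: measure_measure_pmf_finite)
  also have "snd -` {y} = (\<lambda>x. (x,y)) ` UNIV" by auto
  also have "sum (pmf \<omega>) ((\<lambda>x. (x,y)) ` UNIV) = (\<Sum>x\<in>UNIV. pmf \<omega> (x,y))"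
    by (subst sum.reindex) (auto simp: inj_on_def)
  finally show ?thesis by simp
qed

lemma sum_pmf_UNIV: "(\<Sum>x\<in>UNIV. pmf (p::'a::finite pmf) x) = 1"
  by (rule sum_pmf_eq_1) auto

lemma coupling_perturb:
  fixes \<mu> \<nu> \<mu>' \<nu>' :: "'a::finite pmf" and \<omega> and d :: "'a \<Rightarrow> 'a \<Rightarrow> real"
  assumes om: "\<omega> \<in> couplings \<mu> \<nu>" and d: "\<forall>x y. 0 \<le> d x y \<and> d x y \<le> 1"
  shows "\<exists>\<omega>'\<in>couplings \<mu>' \<nu>'. (\<Sum>p\<in>UNIV. pmf \<omega>' p * d (fst p) (snd p))
     \<le> (\<Sum>p\<in>UNIV. pmf \<omega> p * d (fst p) (snd p)) + (\<Sum>x\<in>UNIV. \<bar>pmf \<mu> x - pmf \<mu>' x\<bar>)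
        + (\<Sum>y\<in>UNIV. \<bar>pmf \<nu> y - pmf \<nu>' y\<bar>)"
proof -
  define a where "a x = min 1 (pmf \<mu>' x / pmf \<mu> x)" for x
  define b where "b y = min 1 (pmf \<nu>' y / pmf \<nu> y)" for y
  define w1 where "w1 x y = pmf \<omega> (x,y) * a x * b y" for x y
  define r1 where "r1 x = pmf \<mu>' x - (\<Sum>y\<in>UNIV. w1 x y)" for x
  define r2 where "r2 y = pmf \<nu>' y - (\<Sum>x\<in>UNIV. w1 x y)" for y
  define R where "R = 1 - (\<Sum>x\<in>UNIV. \<Sum>y\<in>UNIV. w1 x y)"
  define w' where "w' p = w1 (fst p) (snd p) + r1 (fst p) * r2 (snd p) / R" for p
  have mu: "(\<Sum>y\<in>UNIV. pmf \<omega> (x,y)) = pmf \<mu> x" for x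
    using om marg1[of \<omega> x] by (simp add: couplings_def)
  have nu: "(\<Sum>x\<in>UNIV. pmf \<omega> (x,y)) = pmf \<nu> y" for y
    using om marg2[of \<omega> y] by (simp add: couplings_def)
  have a0: "0 \<le> a x" and a1: "a x \<le> 1" for x by (auto simp: a_def)
  have b0: "0 \<le> b x" and b1: "b x \<le> 1" for x by (auto simp: b_def)
  have amu: "pmf \<mu> x * a x = min (pmf \<mu> x) (pmf \<mu>' x)" for x
  proof (cases "pmf \<mu> x = 0")
    case True then show ?thesis by (simp add: a_def min_def)
  next
    case False
    then have "pmf \<mu> x > 0" using pmf_nonneg[of \<mu> x] by linarith
    then show ?thesis by (simp add: a_def min_def field_simps)
  qed
  have bnu: "pmf \<nu> x * b x = min (pmf \<nu> x) (pmf \<nu>' x)" for x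
  proof (cases "pmf \<nu> x = 0")
    case True then show ?thesis by (simp add: b_def min_def)
  next
    case False
    then have "pmf \<nu> x > 0" using pmf_nonneg[of \<nu> x] by linarith
    then show ?thesis by (simp add: b_def min_def field_simps)
  qed
  have w1_nn: "0 \<le> w1 x y" for x y by (simp add: w1_def a0 b0)
  have w1_le_a: "w1 x y \<le> pmf \<omega> (x,y) * a x" for x y
    unfolding w1_def by (rule mult_left_le) (auto simp: a0 b1)
  have w1_le_b: "w1 x y \<le> pmf \<omega> (x,y) * b y" for x y
    unfolding w1_def using mult_left_le[OF a1[of x], of "pmf \<omega> (x,y) * b y"] b0[of y]
    by (simp add: mult_ac)
  have w1_le: "w1 x y \<le> pmf \<omega> (x,y)" for x y
    using w1_le_a[of x y] mult_left_le[OF a1[of x] pmf_nonneg[of \<omega> "(x,y)"]] by linarith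
  have row: "(\<Sum>y\<in>UNIV. w1 x y) \<le> pmf \<mu>' x" for x
  proof -
    have "(\<Sum>y\<in>UNIV. w1 x y) \<le> (\<Sum>y\<in>UNIV. pmf \<omega> (x,y) * a x)" by (rule sum_mono) (rule w1_le_a)
    also have "\<dots> = pmf \<mu> x * a x" by (simp add: sum_distrib_right[symmetric] mu)
    finally show ?thesis using amu[of x] by linarith
  qed
  have col: "(\<Sum>x\<in>UNIV. w1 x y) \<le> pmf \<nu>' y" for y
  proof -
    have "(\<Sum>x\<in>UNIV. w1 x y) \<le> (\<Sum>x\<in>UNIV. pmf \<omega> (x,y) * b y)" by (rule sum_mono) (rule w1_le_b)
    also have "\<dots> = pmf \<nu> y * b y" by (simp add: sum_distrib_right[symmetric] nu)
    finally show ?thesis using bnu[of y] by linarith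
  qed
  have r1_nn: "0 \<le> r1 x" for x using row[of x] by (simp add: r1_def)
  have r2_nn: "0 \<le> r2 x" for x using col[of x] by (simp add: r2_def)
  have sr1: "(\<Sum>x\<in>UNIV. r1 x) = R"
    by (simp add: r1_def R_def sum_subtractf sum_pmf_UNIV)
  have sr2: "(\<Sum>x\<in>UNIV. r2 x) = R"
  proof -
    have "(\<Sum>y\<in>UNIV. r2 y) = (\<Sum>y\<in>UNIV. pmf \<nu>' y) - (\<Sum>y\<in>UNIV. \<Sum>x\<in>UNIV. w1 x y)"
      by (simp add: r2_def sum_subtractf)
    also have "(\<Sum>y\<in>UNIV. \<Sum>x\<in>UNIV. w1 x y) = (\<Sum>x\<in>UNIV. \<Sum>y\<in>UNIV. w1 x y)"
      by (rule sum.swap)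
    finally show ?thesis by (simp add: R_def sum_pmf_UNIV)
  qed
  have R_nn: "0 \<le> R" using sr1 sum_nonneg[of UNIV r1] r1_nn by auto
  have r1_0: "r1 x = 0" if "R = 0" for x
    using sr1 that r1_nn sum_nonneg_eq_0_iff[of UNIV r1] by auto
  have r2_0: "r2 x = 0" if "R = 0" for x
    using sr2 that r2_nn sum_nonneg_eq_0_iff[of UNIV r2] by auto
  have w'_nn: "0 \<le> w' p" for p
    unfolding w'_def using w1_nn r1_nn r2_nn R_nn by (simp add: add_nonneg_nonneg)
  have m1: "(\<Sum>y\<in>UNIV. w' (x,y)) = pmf \<mu>' x" for x
  proof (cases "R = 0")
    case True then show ?thesis using r1_0 row by (simp add: w'_def r1_def)
  next
    case False
    have "(\<Sum>y\<in>UNIV. w' (x,y)) = (\<Sum>y\<in>UNIV. w1 x y) + r1 x * (\<Sum>y\<in>UNIV. r2 y) / R"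
      by (simp add: w'_def sum.distrib sum_distrib_left sum_divide_distrib)
    also have "\<dots> = pmf \<mu>' x" using False by (simp add: sr2 r1_def)
    finally show ?thesis .
  qed
  have m2: "(\<Sum>x\<in>UNIV. w' (x,y)) = pmf \<nu>' y" for y
  proof (cases "R = 0")
    case True then show ?thesis using r2_0 col by (simp add: w'_def r2_def)
  next
    case False
    have "(\<Sum>x\<in>UNIV. w' (x,y)) = (\<Sum>x\<in>UNIV. w1 x y) + (\<Sum>x\<in>UNIV. r1 x) * r2 y / R"
      by (simp add: w'_def sum.distrib sum_distrib_right sum_divide_distrib)
    also have "\<dots> = pmf \<nu>' y" using False by (simp add: sr1 r2_def)
    finally show ?thesis .
  qed
  have tot: "(\<Sum>p\<in>UNIV. w' p) = 1"
    by (simp add: sum_UNIV_pair m1 sum_pmf_UNIV)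
  define \<omega>' where "\<omega>' = embed_pmf w'"
  have pw: "pmf \<omega>' p = w' p" for p
    unfolding \<omega>'_def
    by (rule pmf_embed_pmf) (auto simp: w'_nn nn_integral_count_space_finite tot)
  have cp: "\<omega>' \<in> couplings \<mu>' \<nu>'"
    unfolding couplings_def
    by (auto intro!: pmf_eqI simp: marg1[symmetric] marg2[symmetric] pw m1 m2)
  have ww: "(\<Sum>x\<in>UNIV. \<Sum>y\<in>UNIV. pmf \<omega> (x,y)) = 1" by (simp add: mu sum_pmf_UNIV)
  have Rle: "R \<le> (\<Sum>x\<in>UNIV. \<bar>pmf \<mu> x - pmf \<mu>' x\<bar>) + (\<Sum>y\<in>UNIV. \<bar>pmf \<nu> y - pmf \<nu>' y\<bar>)"
  proof -
    have "R = (\<Sum>x\<in>UNIV. \<Sum>y\<in>UNIV. pmf \<omega> (x,y) - w1 x y)"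
      by (simp add: R_def sum_subtractf ww)
    also have "\<dots> \<le> (\<Sum>x\<in>UNIV. \<Sum>y\<in>UNIV. pmf \<omega> (x,y) * (1 - a x) + pmf \<omega> (x,y) * (1 - b y))"
    proof (intro sum_mono)
      fix x y
      have "0 \<le> pmf \<omega> (x,y) * ((1 - a x) * (1 - b y))"
        using a1[of x] b1[of y] by simp
      then show "pmf \<omega> (x,y) - w1 x y \<le> pmf \<omega> (x,y) * (1 - a x) + pmf \<omega> (x,y) * (1 - b y)"
        by (simp add: w1_def algebra_simps)
    qed
    also have "\<dots> = (\<Sum>x\<in>UNIV. \<Sum>y\<in>UNIV. pmf \<omega> (x,y) * (1 - a x)) + (\<Sum>x\<in>UNIV. \<Sum>y\<in>UNIV. pmf \<omega> (x,y) * (1 - b y))"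
      by (simp only: sum.distrib)
    also have "(\<Sum>x\<in>UNIV. \<Sum>y\<in>UNIV. pmf \<omega> (x,y) * (1 - b y)) = (\<Sum>y\<in>UNIV. \<Sum>x\<in>UNIV. pmf \<omega> (x,y) * (1 - b y))"
      by (rule sum.swap)
    also have "(\<Sum>y\<in>UNIV. \<Sum>x\<in>UNIV. pmf \<omega> (x,y) * (1 - b y)) = (\<Sum>y\<in>UNIV. pmf \<nu> y - pmf \<nu> y * b y)"
    proof (intro sum.cong refl)
      fix y show "(\<Sum>x\<in>UNIV. pmf \<omega> (x,y) * (1 - b y)) = pmf \<nu> y - pmf \<nu> y * b y"
        by (subst sum_distrib_right[symmetric]) (simp add: nu right_diff_distrib)
    qed
    also have "(\<Sum>x\<in>UNIV. \<Sum>y\<in>UNIV. pmf \<omega> (x,y) * (1 - a x)) = (\<Sum>x\<in>UNIV. pmf \<mu> x - pmf \<mu> x * a x)"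
    proof (intro sum.cong refl)
      fix x show "(\<Sum>y\<in>UNIV. pmf \<omega> (x,y) * (1 - a x)) = pmf \<mu> x - pmf \<mu> x * a x"
        by (subst sum_distrib_right[symmetric]) (simp add: mu right_diff_distrib)
    qed
    also have "(\<Sum>x\<in>UNIV. pmf \<mu> x - pmf \<mu> x * a x) + (\<Sum>y\<in>UNIV. pmf \<nu> y - pmf \<nu> y * b y) \<le> (\<Sum>x\<in>UNIV. \<bar>pmf \<mu> x - pmf \<mu>' x\<bar>) + (\<Sum>y\<in>UNIV. \<bar>pmf \<nu> y - pmf \<nu>' y\<bar>)"
      by (intro add_mono sum_mono) (auto simp: amu bnu)
    finally show ?thesis .
  qed
  have "(\<Sum>p\<in>UNIV. pmf \<omega>' p * d (fst p) (snd p))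
      = (\<Sum>p\<in>UNIV. w1 (fst p) (snd p) * d (fst p) (snd p))
        + (\<Sum>p\<in>UNIV. r1 (fst p) * r2 (snd p) / R * d (fst p) (snd p))"
    by (simp add: pw w'_def sum.distrib distrib_right)
  also have "\<dots> \<le> (\<Sum>p\<in>UNIV. pmf \<omega> p * d (fst p) (snd p)) + (\<Sum>p\<in>UNIV. r1 (fst p) * r2 (snd p) / R)"
  proof (intro add_mono sum_mono)
    fix p :: "'a \<times> 'a"
    show "w1 (fst p) (snd p) * d (fst p) (snd p) \<le> pmf \<omega> p * d (fst p) (snd p)"
      using w1_le[of "fst p" "snd p"] d by (intro mult_right_mono) auto
    have "0 \<le> r1 (fst p) * r2 (snd p) / R" using r1_nn r2_nn R_nn by simp
    then show "r1 (fst p) * r2 (snd p) / R * d (fst p) (snd p) \<le> r1 (fst p) * r2 (snd p) / R"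
      using d mult_left_le by blast
  qed
  also have "(\<Sum>p\<in>UNIV. r1 (fst p) * r2 (snd p) / R) = (\<Sum>x\<in>UNIV. r1 x) * (\<Sum>y\<in>UNIV. r2 y) / R"
    by (simp add: sum_UNIV_pair sum_product sum_divide_distrib)
  also have "\<dots> \<le> R" using R_nn by (cases "R = 0") (simp_all add: sr1 sr2)
  finally show ?thesis using cp Rle by (intro bexI[of _ \<omega>']) auto
qed


lemma pair_in_couplings: "pair_pmf \<mu> \<nu> \<in> couplings \<mu> \<nu>"
  by (simp add: couplings_def map_fst_pair_pmf map_snd_pair_pmf)

lemma Delta_le_sum:
  fixes lab :: "'a::finite \<Rightarrow> 'l"
  assumes "lab u = lab v" "\<omega> \<in> couplings (\<sigma> u) (\<sigma> v)"
  shows "Delta lab \<sigma> d u v \<le> (\<Sum>p\<in>UNIV. pmf \<omega> p * d (fst p) (snd p))"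
proof -
  have bd: "- (\<Sum>p\<in>UNIV. \<bar>d (fst p) (snd p)\<bar>) \<le> (\<Sum>p\<in>UNIV. pmf \<omega>' p * d (fst p) (snd p))"
    for \<omega>' :: "('a \<times> 'a) pmf"
  proof -
    have "- (\<Sum>p\<in>UNIV. \<bar>d (fst p) (snd p)\<bar>) = (\<Sum>p\<in>UNIV. - \<bar>d (fst p) (snd p)\<bar>)"
      by (simp add: sum_negf)
    also have "\<dots> \<le> (\<Sum>p\<in>UNIV. pmf \<omega>' p * d (fst p) (snd p))"
    proof (rule sum_mono)
      fix p
      have "\<bar>pmf \<omega>' p * d (fst p) (snd p)\<bar> \<le> \<bar>d (fst p) (snd p)\<bar>"
        using mult_left_le_one_le[of "\<bar>d (fst p) (snd p)\<bar>" "pmf \<omega>' p"] pmf_le_1[of \<omega>' p]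
        by (simp add: abs_mult)
      then show "- \<bar>d (fst p) (snd p)\<bar> \<le> pmf \<omega>' p * d (fst p) (snd p)" by linarith
    qed
    finally show ?thesis .
  qed
  show ?thesis unfolding Delta_def using assms
    by (auto intro!: cInf_lower simp: bdd_below_def intro!: exI[of _ "- (\<Sum>p\<in>UNIV. \<bar>d (fst p) (snd p)\<bar>)"] bd)
qed

lemma Delta_ge:
  fixes lab :: "'a::finite \<Rightarrow> 'l"
  assumes "lab u = lab v" "\<And>\<omega>. \<omega> \<in> couplings (\<sigma> u) (\<sigma> v) \<Longrightarrow> c \<le> (\<Sum>p\<in>UNIV. pmf \<omega> p * d (fst p) (snd p))"
  shows "c \<le> Delta lab \<sigma> d u v"
  unfolding Delta_def using assms pair_in_couplings[of "\<sigma> u" "\<sigma> v"]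
  by (auto intro!: cInf_greatest)

lemma Delta_mono_eps:
  fixes lab :: "'a::finite \<Rightarrow> 'l"
  assumes le: "\<And>x y. d x y \<le> d' x y + e" and e: "0 \<le> e"
  shows "Delta lab \<sigma> d u v \<le> Delta lab \<sigma> d' u v + e"
proof (cases "lab u = lab v")
  case False then show ?thesis using e by (simp add: Delta_def)
next
  case True
  have "Delta lab \<sigma> d u v - e \<le> Delta lab \<sigma> d' u v"
  proof (rule Delta_ge[OF True])
    fix \<omega> assume om: "\<omega> \<in> couplings (\<sigma> u) (\<sigma> v)"
    have "Delta lab \<sigma> d u v \<le> (\<Sum>p\<in>UNIV. pmf \<omega> p * d (fst p) (snd p))"
      by (rule Delta_le_sum[OF True om])
    also have "\<dots> \<le> (\<Sum>p\<in>UNIV. pmf \<omega> p * (d' (fst p) (snd p) + e))"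
      by (intro sum_mono mult_left_mono le) simp
    also have "\<dots> = (\<Sum>p\<in>UNIV. pmf \<omega> p * d' (fst p) (snd p)) + e"
      by (simp add: distrib_left sum.distrib sum_distrib_right[symmetric] sum_pmf_UNIV)
    finally show "Delta lab \<sigma> d u v - e \<le> (\<Sum>p\<in>UNIV. pmf \<omega> p * d' (fst p) (snd p))" by simp
  qed
  then show ?thesis by simp
qed

lemma dF_ge:
  fixes \<sigma> \<tau> :: "'a::finite \<Rightarrow> 'a pmf"
  shows "\<bar>pmf (\<sigma> s) x - pmf (\<tau> s) x\<bar> \<le> dF \<sigma> \<tau>"
proof -
  have fin: "finite {\<bar>pmf (\<sigma> s) x - pmf (\<tau> s) x\<bar> | s x. True}"
    by (rule finite_subset[of _ "(\<lambda>(s,x). \<bar>pmf (\<sigma> s) x - pmf (\<tau> s) x\<bar>) ` UNIV"]) auto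
  show ?thesis unfolding dF_def by (rule Max_ge[OF fin]) auto
qed

lemma sum_dF:
  fixes \<sigma> \<tau> :: "'a::finite \<Rightarrow> 'a pmf"
  shows "(\<Sum>x\<in>UNIV. \<bar>pmf (\<sigma> s) x - pmf (\<tau> s) x\<bar>) \<le> real CARD('a) * dF \<sigma> \<tau>"
  using sum_bounded_above[of UNIV "\<lambda>x. \<bar>pmf (\<sigma> s) x - pmf (\<tau> s) x\<bar>" "dF \<sigma> \<tau>"] dF_ge
  by auto

lemma Delta_perturb:
  fixes lab :: "'a::finite \<Rightarrow> 'l" and \<sigma> \<tau> :: "'a \<Rightarrow> 'a pmf"
  assumes d: "\<forall>x y. 0 \<le> d x y \<and> d x y \<le> 1"
  shows "Delta lab \<tau> d u v \<le> Delta lab \<sigma> d u v + 2 * real CARD('a) * dF \<sigma> \<tau>"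
proof (cases "lab u = lab v")
  case False
  have "0 \<le> dF \<sigma> \<tau>" using dF_ge[of \<sigma> _ _ \<tau>] abs_ge_zero order_trans by blast
  then show ?thesis using False by (simp add: Delta_def)
next
  case True
  have "Delta lab \<tau> d u v - 2 * real CARD('a) * dF \<sigma> \<tau> \<le> Delta lab \<sigma> d u v"
  proof (rule Delta_ge[OF True])
    fix \<omega> assume om: "\<omega> \<in> couplings (\<sigma> u) (\<sigma> v)"
    from coupling_perturb[OF om d, of "\<tau> u" "\<tau> v"] obtain \<omega>' where
      om': "\<omega>' \<in> couplings (\<tau> u) (\<tau> v)" and
      le: "(\<Sum>p\<in>UNIV. pmf \<omega>' p * d (fst p) (snd p))
     \<le> (\<Sum>p\<in>UNIV. pmf \<omega> p * d (fst p) (snd p)) + (\<Sum>x\<in>UNIV. \<bar>pmf (\<sigma> u) x - pmf (\<tau> u) x\<bar>)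
        + (\<Sum>y\<in>UNIV. \<bar>pmf (\<sigma> v) y - pmf (\<tau> v) y\<bar>)" by blast
    have "Delta lab \<tau> d u v \<le> (\<Sum>p\<in>UNIV. pmf \<omega>' p * d (fst p) (snd p))"
      by (rule Delta_le_sum[OF True om'])
    then show "Delta lab \<tau> d u v - 2 * real CARD('a) * dF \<sigma> \<tau> \<le> (\<Sum>p\<in>UNIV. pmf \<omega> p * d (fst p) (snd p))"
      using le sum_dF[of \<sigma> u \<tau>] sum_dF[of \<sigma> v \<tau>] by linarith
  qed
  then show ?thesis by simp
qed

lemma bisim_props:
  fixes lab :: "'a::finite \<Rightarrow> 'l" and \<sigma> :: "'a \<Rightarrow> 'a pmf"
  shows bisim_lower: "\<And>d s t. (\<forall>u v. 0 \<le> d u v \<and> d u v \<le> 1) \<Longrightarrow> (\<forall>u v. Delta lab \<sigma> d u v \<le> d u v)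
           \<Longrightarrow> bisim_dist lab \<sigma> s t \<le> d s t"
    and bisim_01: "\<And>s t. 0 \<le> bisim_dist lab \<sigma> s t \<and> bisim_dist lab \<sigma> s t \<le> 1"
    and bisim_pre: "\<And>s t. Delta lab \<sigma> (bisim_dist lab \<sigma>) s t \<le> bisim_dist lab \<sigma> s t"
proof -
  have one: "Delta lab \<sigma> (\<lambda>_ _. 1) u v \<le> 1" for u v
  proof (cases "lab u = lab v")
    case True
    have "Delta lab \<sigma> (\<lambda>_ _. 1) u v \<le> (\<Sum>p\<in>UNIV. pmf (pair_pmf (\<sigma> u) (\<sigma> v)) p * 1)"
      by (rule Delta_le_sum[OF True pair_in_couplings])
    then show ?thesis by (simp add: sum_pmf_UNIV)
  qed (simp add: Delta_def)
  show low: "bisim_dist lab \<sigma> s t \<le> d s t"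
    if "\<forall>u v. 0 \<le> d u v \<and> d u v \<le> 1" "\<forall>u v. Delta lab \<sigma> d u v \<le> d u v" for d s t
    unfolding bisim_dist_def using that
    by (intro cInf_lower) (auto simp: bdd_below_def)
  show "0 \<le> bisim_dist lab \<sigma> s t \<and> bisim_dist lab \<sigma> s t \<le> 1" for s t
  proof
    show "0 \<le> bisim_dist lab \<sigma> s t" unfolding bisim_dist_def
      by (intro cInf_greatest) (use one in \<open>auto intro!: exI[of _ "\<lambda>_ _. 1::real"]\<close>)
    show "bisim_dist lab \<sigma> s t \<le> 1"
      using low[of "\<lambda>_ _. 1" s t] one by simp
  qed
  show "Delta lab \<sigma> (bisim_dist lab \<sigma>) s t \<le> bisim_dist lab \<sigma> s t" for s t
    unfolding bisim_dist_def[of lab \<sigma> s t]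
  proof (rule cInf_greatest)
    show "{d s t |d. (\<forall>u v. 0 \<le> d u v \<and> d u v \<le> 1) \<and> (\<forall>u v. Delta lab \<sigma> d u v \<le> d u v)} \<noteq> {}"
      using one by (auto intro!: exI[of _ "\<lambda>_ _. 1::real"])
    fix r assume "r \<in> {d s t |d. (\<forall>u v. 0 \<le> d u v \<and> d u v \<le> 1) \<and> (\<forall>u v. Delta lab \<sigma> d u v \<le> d u v)}"
    then obtain d where r: "r = d s t" and d1: "\<forall>u v. 0 \<le> d u v \<and> d u v \<le> 1"
      and d2: "\<forall>u v. Delta lab \<sigma> d u v \<le> d u v" by blast
    have "Delta lab \<sigma> (bisim_dist lab \<sigma>) s t \<le> Delta lab \<sigma> d s t + 0"
      by (rule Delta_mono_eps) (use low[OF d1 d2] in auto)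
    then show "Delta lab \<sigma> (bisim_dist lab \<sigma>) s t \<le> r" using d2[rule_format, of s t] r by linarith
  qed
qed


theorem proposition1:
  fixes lab :: "'a::finite \<Rightarrow> 'l" and \<tau> :: "'a \<Rightarrow> 'a pmf"
    and \<tau>s :: "nat \<Rightarrow> 'a \<Rightarrow> 'a pmf" and s t :: 'a
  assumes "(\<lambda>n. dF (\<tau>s n) \<tau>) \<longlonglongrightarrow> 0"
  shows "ereal (bisim_dist lab \<tau> s t) \<le> liminf (\<lambda>n. ereal (bisim_dist lab (\<tau>s n) s t))"
proof -
  define L where "L u v = liminf (\<lambda>n. ereal (bisim_dist lab (\<tau>s n) u v))" for u v
  define D where "D u v = real_of_ereal (L u v)" for u v
  have L0: "0 \<le> L u v" for u v
    unfolding L_def by (rule Liminf_bounded) (simp add: bisim_01)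
  have L1: "L u v \<le> 1" for u v
  proof -
    have "L u v \<le> limsup (\<lambda>n. ereal (bisim_dist lab (\<tau>s n) u v))"
      unfolding L_def by (rule Liminf_le_Limsup) simp
    also have "\<dots> \<le> 1" by (rule Limsup_bounded) (simp add: bisim_01)
    finally show ?thesis .
  qed
  have LD: "ereal (D u v) = L u v" for u v
    using L0[of u v] L1[of u v] unfolding D_def by (cases "L u v") auto
  have D01: "\<forall>u v. 0 \<le> D u v \<and> D u v \<le> 1"
    using L0 L1 LD by (metis ereal_less_eq(5) one_ereal_def ereal_less_eq(3) zero_ereal_def)
  have pre: "\<forall>u v. Delta lab \<tau> D u v \<le> D u v"
  proof (intro allI)
    fix u v
    show "Delta lab \<tau> D u v \<le> D u v"
    proof (rule field_le_epsilon)
      fix e :: real assume e: "0 < e"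
      have ev1: "eventually (\<lambda>n. \<forall>x y. D x y \<le> bisim_dist lab (\<tau>s n) x y + e/2) sequentially"
      proof (intro eventually_all_finite)
        fix x y
        have "ereal (D x y - e/2) < L x y" using e by (simp flip: LD)
        then have "eventually (\<lambda>n. ereal (D x y - e/2) < ereal (bisim_dist lab (\<tau>s n) x y)) sequentially"
          unfolding L_def by (rule less_LiminfD)
        then show "eventually (\<lambda>n. D x y \<le> bisim_dist lab (\<tau>s n) x y + e/2) sequentially"
          by eventually_elim simp
      qed
      have lim: "((\<lambda>n. 2 * real CARD('a) * dF (\<tau>s n) \<tau>) \<longlongrightarrow> 0) sequentially"
        using tendsto_mult[OF tendsto_const[of "2 * real CARD('a)"] assms] by simp
      have e2: "0 < e/2" using e by simp
      have ev2: "eventually (\<lambda>n. 2 * real CARD('a) * dF (\<tau>s n) \<tau> < e/2) sequentially"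
        by (rule order_tendstoD(2)[OF lim e2])
      have "eventually (\<lambda>n. ereal (Delta lab \<tau> D u v - e) \<le> ereal (bisim_dist lab (\<tau>s n) u v)) sequentially"
        using ev1 ev2
      proof eventually_elim
        case (elim n)
        have "Delta lab \<tau> D u v \<le> Delta lab (\<tau>s n) D u v + 2 * real CARD('a) * dF (\<tau>s n) \<tau>"
          by (rule Delta_perturb[OF D01])
        moreover have "Delta lab (\<tau>s n) D u v \<le> Delta lab (\<tau>s n) (bisim_dist lab (\<tau>s n)) u v + e/2"
          by (rule Delta_mono_eps) (use elim e in auto)
        moreover have "Delta lab (\<tau>s n) (bisim_dist lab (\<tau>s n)) u v \<le> bisim_dist lab (\<tau>s n) u v"
          by (rule bisim_pre)
        ultimately show ?case using elim by simp
      qed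
      then have "ereal (Delta lab \<tau> D u v - e) \<le> L u v"
        unfolding L_def by (rule Liminf_bounded)
      then have "ereal (Delta lab \<tau> D u v - e) \<le> ereal (D u v)" by (simp only: LD)
      then show "Delta lab \<tau> D u v \<le> D u v + e" by simp
    qed
  qed
  have "bisim_dist lab \<tau> s t \<le> D s t" by (rule bisim_lower[OF D01 pre])
  then have "ereal (bisim_dist lab \<tau> s t) \<le> ereal (D s t)" by simp
  then show ?thesis using LD[of s t] by (simp add: L_def)
qed

end
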